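(* Let $E$ be a complex Banach lattice, let $A$ be a closed, densely defined operator on $E$, and let $\lambda_0\in\sigma(A)$ be a pole of the resolvent. Assume that $\ker(\lambda_0I-A)$ is one-dimensional and that both $\ker(\lambda_0I-A)$ and $\ker(\lambda_0I-A')$ contain non-zero positive vectors. Assume further that at least one of the following holds: (a) $\ker(\lambda_0I-A)$ contains a quasi-interior point of $E_+$; (b) $\ker(\lambda_0I-A')$ contains a strictly positive functional. Then $\lambda_0$ is an algebraically simple eigenvalue of $A$ (in particular a first-order pole of $R(\cdot,A)$) and the corresponding spectral projection is positive.
   Context: $A'$ is the adjoint of $A$. $u\in E_+$ is a quasi-interior point if the principal ideal $\{f:|f|\le cu \text{ for some }c\ge0\}$ is dense in $E$. $\varphi\in E'$ is strictly positive if $\langle\varphi,f\rangle>0$ for all $f\in E_+\setminus\{0\}$. The spectral projection is the residue of $R(\cdot,A)$ at $\lambda_0$. *)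

theory Defs
  imports "HOL-Analysis.Analysis"
begin

text \<open>A complex Banach lattice E is the complexification of a real Banach lattice E_R.
  We model E_R by a type 'r (a real Banach space which is a vector lattice whose norm is a
  lattice norm) and E by the pair type 'r \<times> 'r, the pair (x,y) standing for x + i y.\<close>

definition real_banach_lattice :: "'r::{banach,ordered_real_vector,lattice} itself \<Rightarrow> bool" where
  "real_banach_lattice _ \<longleftrightarrow>
     (\<forall>x y :: 'r. sup x (-x) \<le> sup y (-y) \<longrightarrow> norm x \<le> norm y)"

definition cscale :: "complex \<Rightarrow> 'r::real_vector \<times> 'r \<Rightarrow> 'r \<times> 'r" where
  "cscale c f = (Re c *\<^sub>R fst f - Im c *\<^sub>R snd f, Im c *\<^sub>R fst f + Re c *\<^sub>R snd f)"

definition complex_linear_op :: "('r::real_vector \<times> 'r \<Rightarrow> 'r \<times> 'r) \<Rightarrow> ('r \<times> 'r) set \<Rightarrow> bool" where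
  "complex_linear_op A D \<longleftrightarrow> 0 \<in> D \<and>
     (\<forall>u\<in>D. \<forall>v\<in>D. u + v \<in> D \<and> A (u + v) = A u + A v) \<and>
     (\<forall>c. \<forall>u\<in>D. cscale c u \<in> D \<and> A (cscale c u) = cscale c (A u))"

definition closed_op :: "('r::real_normed_vector \<times> 'r \<Rightarrow> 'r \<times> 'r) \<Rightarrow> ('r \<times> 'r) set \<Rightarrow> bool" where
  "closed_op A D \<longleftrightarrow> closed {(u, A u) | u. u \<in> D}"

definition densely_defined :: "('r::real_normed_vector \<times> 'r) set \<Rightarrow> bool" where
  "densely_defined D \<longleftrightarrow> closure D = UNIV"

definition resolvent :: "('r::real_vector \<times> 'r \<Rightarrow> 'r \<times> 'r) \<Rightarrow> ('r \<times> 'r) set \<Rightarrow> complex \<Rightarrow> 'r \<times> 'r \<Rightarrow> 'r \<times> 'r" where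
  "resolvent A D l y = (THE u. u \<in> D \<and> cscale l u - A u = y)"

definition resolvent_set :: "('r::real_normed_vector \<times> 'r \<Rightarrow> 'r \<times> 'r) \<Rightarrow> ('r \<times> 'r) set \<Rightarrow> complex set" where
  "resolvent_set A D = {l. (\<forall>y. \<exists>!u. u \<in> D \<and> cscale l u - A u = y) \<and> bounded_linear (resolvent A D l)}"

definition spectrum_op :: "('r::real_normed_vector \<times> 'r \<Rightarrow> 'r \<times> 'r) \<Rightarrow> ('r \<times> 'r) set \<Rightarrow> complex set" where
  "spectrum_op A D = - resolvent_set A D"

definition resolvent_pole :: "('r::banach \<times> 'r \<Rightarrow> 'r \<times> 'r) \<Rightarrow> ('r \<times> 'r) set \<Rightarrow> complex \<Rightarrow> bool" where
  "resolvent_pole A D l0 \<longleftrightarrow> l0 \<in> spectrum_op A D \<and>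
     (\<exists>e>0. ball l0 e - {l0} \<subseteq> resolvent_set A D) \<and>
     (\<exists>n::nat. \<exists>L. ((\<lambda>z. Blinfun (\<lambda>y. cscale ((z - l0) ^ n) (resolvent A D z y))) \<longlongrightarrow> L) (at l0))"

definition first_order_pole :: "('r::banach \<times> 'r \<Rightarrow> 'r \<times> 'r) \<Rightarrow> ('r \<times> 'r) set \<Rightarrow> complex \<Rightarrow> bool" where
  "first_order_pole A D l0 \<longleftrightarrow> resolvent_pole A D l0 \<and>
     (\<exists>L. ((\<lambda>z. Blinfun (\<lambda>y. cscale (z - l0) (resolvent A D z y))) \<longlongrightarrow> L) (at l0))"

definition eigenspace_op :: "('r::real_vector \<times> 'r \<Rightarrow> 'r \<times> 'r) \<Rightarrow> ('r \<times> 'r) set \<Rightarrow> complex \<Rightarrow> ('r \<times> 'r) set" where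
  "eigenspace_op A D l = {u \<in> D. cscale l u - A u = 0}"

definition one_dim_cspace :: "('r::real_vector \<times> 'r) set \<Rightarrow> bool" where
  "one_dim_cspace S \<longleftrightarrow> (\<exists>v. v \<noteq> 0 \<and> S = range (\<lambda>c. cscale c v))"

definition pos_vec :: "'r::{real_vector,order} \<times> 'r \<Rightarrow> bool" where
  "pos_vec f \<longleftrightarrow> snd f = 0 \<and> fst f \<ge> 0"

definition dual_functional :: "('r::real_normed_vector \<times> 'r \<Rightarrow> complex) \<Rightarrow> bool" where
  "dual_functional \<phi> \<longleftrightarrow> bounded_linear \<phi> \<and> (\<forall>c f. \<phi> (cscale c f) = c * \<phi> f)"

definition adjoint_rel :: "('r::real_normed_vector \<times> 'r \<Rightarrow> 'r \<times> 'r) \<Rightarrow> ('r \<times> 'r) set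
    \<Rightarrow> ('r \<times> 'r \<Rightarrow> complex) \<Rightarrow> ('r \<times> 'r \<Rightarrow> complex) \<Rightarrow> bool" where
  "adjoint_rel A D \<phi> \<psi> \<longleftrightarrow> dual_functional \<phi> \<and> dual_functional \<psi> \<and> (\<forall>u\<in>D. \<phi> (A u) = \<psi> u)"

definition adj_eigenspace :: "('r::real_normed_vector \<times> 'r \<Rightarrow> 'r \<times> 'r) \<Rightarrow> ('r \<times> 'r) set
    \<Rightarrow> complex \<Rightarrow> ('r \<times> 'r \<Rightarrow> complex) set" where
  "adj_eigenspace A D l = {\<phi>. adjoint_rel A D \<phi> (\<lambda>f. l * \<phi> f)}"

definition pos_functional :: "('r::{real_normed_vector,order} \<times> 'r \<Rightarrow> complex) \<Rightarrow> bool" where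
  "pos_functional \<phi> \<longleftrightarrow> (\<forall>f. pos_vec f \<longrightarrow> Im (\<phi> f) = 0 \<and> Re (\<phi> f) \<ge> 0)"

definition strictly_pos_functional :: "('r::{real_normed_vector,order} \<times> 'r \<Rightarrow> complex) \<Rightarrow> bool" where
  "strictly_pos_functional \<phi> \<longleftrightarrow> (\<forall>f. pos_vec f \<and> f \<noteq> 0 \<longrightarrow> Im (\<phi> f) = 0 \<and> Re (\<phi> f) > 0)"

text \<open>Principal ideal {f. |f| \<le> c u for some c \<ge> 0}, where for f = x + i y the modulus
  |f| = sup over \<theta> of (cos \<theta> x + sin \<theta> y); so |f| \<le> c u iff c u is an upper bound of that set.\<close>
definition principal_ideal :: "'r::{real_vector,order} \<times> 'r \<Rightarrow> ('r \<times> 'r) set" where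
  "principal_ideal u = {f. \<exists>c::real. c \<ge> 0 \<and>
      (\<forall>\<theta>::real. cos \<theta> *\<^sub>R fst f + sin \<theta> *\<^sub>R snd f \<le> c *\<^sub>R fst u)}"

definition quasi_interior :: "'r::{real_normed_vector,order} \<times> 'r \<Rightarrow> bool" where
  "quasi_interior u \<longleftrightarrow> pos_vec u \<and> closure (principal_ideal u) = UNIV"

definition pos_op :: "('r::{real_vector,order} \<times> 'r \<Rightarrow> 'r \<times> 'r) \<Rightarrow> bool" where
  "pos_op P \<longleftrightarrow> (\<forall>f. pos_vec f \<longrightarrow> pos_vec (P f))"

text \<open>Spectral projection = residue of R(.,A) at l0:
  P f = (1/(2 pi i)) \<ointegral>_{|z-l0|=\<epsilon>} R(z,A) f dz for all small \<epsilon> > 0,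
  written out with \<gamma>(t) = l0 + \<epsilon> e^{2 pi i t}, \<gamma>'(t)/(2 pi i) = \<epsilon> e^{2 pi i t}.\<close>
definition spectral_projection :: "('r::banach \<times> 'r \<Rightarrow> 'r \<times> 'r) \<Rightarrow> ('r \<times> 'r) set \<Rightarrow> complex
    \<Rightarrow> ('r \<times> 'r \<Rightarrow> 'r \<times> 'r) \<Rightarrow> bool" where
  "spectral_projection A D l0 P \<longleftrightarrow> (\<exists>e>0. \<forall>\<epsilon>. 0 < \<epsilon> \<and> \<epsilon> < e \<longrightarrow> (\<forall>f.
     ((\<lambda>t::real. cscale (of_real \<epsilon> * exp (2 * of_real pi * \<i> * of_real t))
          (resolvent A D (l0 + of_real \<epsilon> * exp (2 * of_real pi * \<i> * of_real t)) f))
       has_integral P f) {0..1}))"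

end

theory Submission
  imports Defs "HOL-Complex_Analysis.Complex_Analysis"
begin



lemma cs_add: "cscale c (u + v) = cscale c u + cscale c (v::'r::real_vector \<times> 'r)"
  by (simp add: cscale_def prod_eq_iff algebra_simps)
lemma cs_diff: "cscale c (u - v) = cscale c u - cscale c (v::'r::real_vector \<times> 'r)"
  by (simp add: cscale_def prod_eq_iff algebra_simps)
lemma cs_minus: "cscale c (- v) = - cscale c (v::'r::real_vector \<times> 'r)"
  by (simp add: cscale_def prod_eq_iff algebra_simps)
lemma cs_zero[simp]: "cscale c (0::'r::real_vector \<times> 'r) = 0"
  by (simp add: cscale_def prod_eq_iff)
lemma cs_zero_left[simp]: "cscale 0 (v::'r::real_vector \<times> 'r) = 0"
  by (simp add: cscale_def prod_eq_iff)
lemma cs_one[simp]: "cscale 1 (v::'r::real_vector \<times> 'r) = v"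
  by (simp add: cscale_def prod_eq_iff)
lemma cs_mult: "cscale a (cscale b v) = cscale (a * b) (v::'r::real_vector \<times> 'r)"
  by (simp add: cscale_def prod_eq_iff algebra_simps)
lemma cs_addl: "cscale (a + b) v = cscale a v + cscale b (v::'r::real_vector \<times> 'r)"
  by (simp add: cscale_def prod_eq_iff algebra_simps)
lemma cs_diffl: "cscale (a - b) v = cscale a v - cscale b (v::'r::real_vector \<times> 'r)"
  by (simp add: cscale_def prod_eq_iff algebra_simps)
lemma cs_scaleR: "cscale a (r *\<^sub>R v) = r *\<^sub>R cscale a (v::'r::real_vector \<times> 'r)"
  by (simp add: cscale_def prod_eq_iff algebra_simps)
lemma cs_of_real: "cscale (of_real r) v = r *\<^sub>R (v::'r::real_vector \<times> 'r)"
  by (simp add: cscale_def prod_eq_iff algebra_simps)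
lemma cs_scaleRl: "cscale (r *\<^sub>R a) v = r *\<^sub>R cscale a (v::'r::real_vector \<times> 'r)"
  by (simp add: cscale_def prod_eq_iff algebra_simps)
lemma cs_comm: "cscale a (cscale b v) = cscale b (cscale a (v::'r::real_vector \<times> 'r))"
  by (simp add: cs_mult mult.commute)
lemma cs_inv: "a \<noteq> 0 \<Longrightarrow> cscale (inverse a) (cscale a v) = (v::'r::real_vector \<times> 'r)"
  by (simp add: cs_mult)
lemma cs_sum: "cscale c (sum f S) = sum (\<lambda>i. cscale c (f i)) S"
  by (induction S rule: infinite_finite_induct) (auto simp: cs_add)
lemma cs_suml: "cscale (sum f S) v = sum (\<lambda>i. cscale (f i) v) S"
  by (induction S rule: infinite_finite_induct) (auto simp: cs_addl)

lemma norm_cs: "norm (cscale c (v::'r::real_normed_vector \<times> 'r)) \<le> 4 * cmod c * norm v"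
proof -
  obtain x y where v: "v = (x,y)" by fastforce
  have re: "\<bar>Re c\<bar> \<le> cmod c" and im: "\<bar>Im c\<bar> \<le> cmod c" by (simp_all add: abs_Re_le_cmod abs_Im_le_cmod)
  have nx: "norm x \<le> norm v" and ny: "norm y \<le> norm v" using v
    by (simp_all add: norm_Pair real_le_rsqrt)
  have "norm (cscale c v) \<le> norm (Re c *\<^sub>R x - Im c *\<^sub>R y) + norm (Im c *\<^sub>R x + Re c *\<^sub>R y)"
    using sqrt_sum_squares_le_sum_abs[of "norm (Re c *\<^sub>R x - Im c *\<^sub>R y)" "norm (Im c *\<^sub>R x + Re c *\<^sub>R y)"]
    by (simp add: cscale_def v norm_Pair)
  also have "\<dots> \<le> (\<bar>Re c\<bar> * norm x + \<bar>Im c\<bar> * norm y) + (\<bar>Im c\<bar> * norm x + \<bar>Re c\<bar> * norm y)"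
    by (intro add_mono order.trans[OF norm_triangle_ineq4] order.trans[OF norm_triangle_ineq]) auto
  also have "\<dots> \<le> (cmod c * norm v + cmod c * norm v) + (cmod c * norm v + cmod c * norm v)"
    by (intro add_mono mult_mono re im nx ny) auto
  finally show ?thesis by simp
qed

lemma bounded_bilinear_cs: "bounded_bilinear (\<lambda>c (v::'r::real_normed_vector \<times> 'r). cscale c v)"
proof
  show "\<exists>K. \<forall>a b. norm (cscale a (b::'r \<times> 'r)) \<le> norm a * norm b * K"
    by (rule exI[of _ 4]) (auto intro: order.trans[OF norm_cs] simp: ac_simps)
qed (simp_all add: cs_add cs_addl cs_scaleR cs_scaleRl)

lemmas bounded_linear_cs_right = bounded_bilinear.bounded_linear_right[OF bounded_bilinear_cs]
lemmas bounded_linear_cs_left = bounded_bilinear.bounded_linear_left[OF bounded_bilinear_cs]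
lemmas tendsto_cs[tendsto_intros] = bounded_bilinear.tendsto[OF bounded_bilinear_cs]
lemmas continuous_on_cs[continuous_intros] = bounded_bilinear.continuous_on[OF bounded_bilinear_cs]
lemmas continuous_cs[continuous_intros] = bounded_bilinear.continuous[OF bounded_bilinear_cs]




locale opsetting =
  fixes A :: "'r::banach \<times> 'r \<Rightarrow> 'r \<times> 'r" and D :: "('r \<times> 'r) set"
  assumes lin: "complex_linear_op A D" and clo: "closed_op A D"
begin

abbreviation "R \<equiv> resolvent A D"
abbreviation "U \<equiv> resolvent_set A D"

lemma D_add: "u \<in> D \<Longrightarrow> v \<in> D \<Longrightarrow> u + v \<in> D" and A_add: "u \<in> D \<Longrightarrow> v \<in> D \<Longrightarrow> A (u + v) = A u + A v"
  using lin unfolding complex_linear_op_def by auto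
lemma D_cs: "u \<in> D \<Longrightarrow> cscale c u \<in> D" and A_cs: "u \<in> D \<Longrightarrow> A (cscale c u) = cscale c (A u)"
  using lin unfolding complex_linear_op_def by auto
lemma D_zero: "0 \<in> D" using lin unfolding complex_linear_op_def by auto
lemma A_zero: "A 0 = 0"
  using A_cs[OF D_zero, of 0] by simp
lemma cs_m1: "cscale (-1) v = - (v::'r \<times> 'r)" by (simp add: cscale_def prod_eq_iff)
lemma D_diff: "u \<in> D \<Longrightarrow> v \<in> D \<Longrightarrow> u - v \<in> D"
  using D_add[of u "cscale (-1) v"] D_cs[of v "-1"] by (simp add: cs_m1)
lemma A_diff: "u \<in> D \<Longrightarrow> v \<in> D \<Longrightarrow> A (u - v) = A u - A v"
  using A_add[of u "cscale (-1) v"] D_cs[of v "-1"] A_cs[of v "-1"] by (simp add: cs_m1)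

lemma res_ex: "z \<in> U \<Longrightarrow> \<exists>!u. u \<in> D \<and> cscale z u - A u = y"
  by (simp only: resolvent_set_def mem_Collect_eq)
lemma res_bl: "z \<in> U \<Longrightarrow> bounded_linear (R z)"
  unfolding resolvent_set_def by auto
lemma res_D: "z \<in> U \<Longrightarrow> R z y \<in> D" and res_eq: "z \<in> U \<Longrightarrow> cscale z (R z y) - A (R z y) = y"
  using theI'[OF res_ex[of z y]] unfolding resolvent_def by auto
lemma res_unique: "z \<in> U \<Longrightarrow> u \<in> D \<Longrightarrow> cscale z u - A u = y \<Longrightarrow> R z y = u"
  using res_ex[of z y] res_D[of z y] res_eq[of z y] by blast

lemma res_cs: assumes "z \<in> U" shows "R z (cscale c y) = cscale c (R z y)"
proof (rule res_unique[OF assms])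
  show "cscale c (R z y) \<in> D" by (rule D_cs[OF res_D[OF assms]])
  show "cscale z (cscale c (R z y)) - A (cscale c (R z y)) = cscale c y"
    using res_eq[OF assms, of y] by (simp add: A_cs[OF res_D[OF assms]] cs_comm[of z c] cs_diff[symmetric])
qed

lemma res_identity: assumes z: "z \<in> U" and w: "w \<in> U"
  shows "R z y = R w y + cscale (w - z) (R z (R w y))"
proof (rule res_unique[OF z])
  let ?a = "R w y" and ?b = "R z (R w y)"
  have a: "?a \<in> D" and b: "?b \<in> D" using res_D z w by auto
  show "?a + cscale (w - z) ?b \<in> D" by (intro D_add D_cs a b)
  have ea: "cscale w ?a - A ?a = y" by (rule res_eq[OF w])
  have eb: "cscale z ?b - A ?b = ?a" by (rule res_eq[OF z])
  have "cscale z (?a + cscale (w - z) ?b) - A (?a + cscale (w - z) ?b)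
      = (cscale z ?a - A ?a) + cscale (w - z) (cscale z ?b - A ?b)"
    by (simp add: A_add[OF a D_cs[OF b]] A_cs[OF b] cs_add cs_diff cs_comm[of z "w - z"] algebra_simps)
  also have "cscale z ?a - A ?a = y - cscale (w - z) ?a"
    using ea by (simp add: cs_diffl algebra_simps)
  finally show "cscale z (?a + cscale (w - z) ?b) - A (?a + cscale (w - z) ?b) = y"
    using eb by simp
qed

end



context opsetting begin

definition "N z = onorm (R z)"

lemma N_ge0: "z \<in> U \<Longrightarrow> 0 \<le> N z"
  unfolding N_def by (rule onorm_pos_le[OF res_bl])
lemma N_bound: "z \<in> U \<Longrightarrow> norm (R z y) \<le> N z * norm y"
  unfolding N_def by (rule onorm[OF res_bl])

lemma N_near: assumes z: "z \<in> U" and w: "w \<in> U" and c: "8 * cmod (w - z) * (N w + 1) \<le> 1"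
  shows "N z \<le> 2 * N w"
proof -
  have Nw: "0 \<le> N w" "0 \<le> N z" using N_ge0 z w by auto
  have "onorm (R z) \<le> N w + 4 * cmod (w - z) * N z * N w"
  proof (rule onorm_bound)
    show "0 \<le> N w + 4 * cmod (w - z) * N z * N w" using Nw by simp
  next
    fix y
    have "norm (R z y) \<le> norm (R w y) + norm (cscale (w - z) (R z (R w y)))"
      by (subst res_identity[OF z w]) (rule norm_triangle_ineq)
    also have "norm (cscale (w - z) (R z (R w y))) \<le> 4 * cmod (w - z) * (N z * (N w * norm y))"
      by (rule order.trans[OF norm_cs]) (intro mult_left_mono order.trans[OF N_bound[OF z]] N_bound[OF w], auto simp: Nw)
    finally show "norm (R z y) \<le> (N w + 4 * cmod (w - z) * N z * N w) * norm y"
      using N_bound[OF w, of y] by (simp add: algebra_simps)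
  qed
  then have "N z \<le> N w + 4 * cmod (w - z) * N z * N w" by (simp add: N_def)
  also have "4 * cmod (w - z) * N z * N w \<le> N z / 2"
  proof -
    have "8 * cmod (w - z) * N w \<le> 1" using c Nw by (smt (verit) mult_left_mono norm_ge_zero)
    then have "(8 * cmod (w - z) * N w) * N z \<le> 1 * N z" using Nw by (intro mult_right_mono) auto
    then show ?thesis by (simp add: ac_simps)
  qed
  finally show ?thesis by simp
qed

lemma res_lip: assumes z: "z \<in> U" and w: "w \<in> U" and c: "8 * cmod (w - z) * (N w + 1) \<le> 1"
  shows "norm (R z y - R w y) \<le> 8 * cmod (w - z) * (N w)\<^sup>2 * norm y"
proof -
  have Nw: "0 \<le> N w" "0 \<le> N z" using N_ge0 z w by auto
  have "norm (R z y - R w y) = norm (cscale (w - z) (R z (R w y)))"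
    by (subst res_identity[OF z w]) simp
  also have "\<dots> \<le> 4 * cmod (w - z) * (N z * (N w * norm y))"
    by (rule order.trans[OF norm_cs]) (intro mult_left_mono order.trans[OF N_bound[OF z]] N_bound[OF w], auto simp: Nw)
  also have "\<dots> \<le> 4 * cmod (w - z) * ((2 * N w) * (N w * norm y))"
    by (intro mult_left_mono mult_right_mono N_near[OF z w c]) (auto simp: Nw)
  finally show ?thesis by (simp add: power2_eq_square algebra_simps)
qed

lemma eventually_near:
  assumes "open V" "V \<subseteq> U" "w \<in> V"
  shows "\<forall>\<^sub>F z in at w. z \<in> U \<and> 8 * cmod (w - z) * (N w + 1) \<le> 1"
proof -
  have "\<forall>\<^sub>F z in at w. z \<in> V" using assms by (simp add: eventually_at_topological) blast
  moreover have "\<forall>\<^sub>F z in at w. dist z w < 1 / (8 * (N w + 1))"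
    using N_ge0[of w] assms unfolding eventually_at by (intro exI[of _ "1 / (8 * (N w + 1))"]) auto
  ultimately show ?thesis
  proof eventually_elim
    case (elim z)
    have p: "0 < N w + 1" using N_ge0[of w] assms by auto
    have "cmod (w - z) * (8 * (N w + 1)) \<le> 1"
      using elim(2) p by (simp add: dist_norm norm_minus_commute field_simps)
    then show ?case using elim assms by (auto simp: ac_simps)
  qed
qed

end



lemma cs_swap: "cscale (z - w) x = - cscale (w - z) (x::'r::real_vector \<times> 'r)"
  by (simp add: cscale_def prod_eq_iff algebra_simps)

context opsetting begin

lemma res_tendsto_comp:
  assumes V: "open V" "V \<subseteq> U" "w \<in> V" and F: "(F \<longlongrightarrow> F w) (at w)"
  shows "((\<lambda>z. R z (F z)) \<longlongrightarrow> R w (F w)) (at w)"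
proof -
  have w: "w \<in> U" using V by auto
  let ?g = "\<lambda>z. 2 * N w * norm (F z - F w) + 8 * cmod (w - z) * (N w)\<^sup>2 * norm (F w)"
  have "((\<lambda>z. R z (F z) - R w (F w)) \<longlongrightarrow> 0) (at w)"
  proof (rule Lim_null_comparison)
    show "\<forall>\<^sub>F z in at w. norm (R z (F z) - R w (F w)) \<le> ?g z"
      using eventually_near[OF V]
    proof eventually_elim
      case (elim z)
      then have z: "z \<in> U" and c: "8 * cmod (w - z) * (N w + 1) \<le> 1" by auto
      have eq: "R z (F z) - R w (F w) = R z (F z - F w) + (R z (F w) - R w (F w))"
        using linear_diff[OF bounded_linear.linear[OF res_bl[OF z]]] by (simp add: algebra_simps)
      have "norm (R z (F z - F w)) \<le> N z * norm (F z - F w)" by (rule N_bound[OF z])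
      also have "\<dots> \<le> 2 * N w * norm (F z - F w)"
        by (intro mult_right_mono N_near[OF z w c]) auto
      finally have 1: "norm (R z (F z - F w)) \<le> 2 * N w * norm (F z - F w)" .
      show ?case unfolding eq using 1 res_lip[OF z w c, of "F w"]
        by (smt (verit) norm_triangle_ineq)
    qed
    have "(?g \<longlongrightarrow> 2 * N w * norm (F w - F w) + 8 * cmod (w - w) * (N w)\<^sup>2 * norm (F w)) (at w)"
      by (intro tendsto_intros F)
    then show "(?g \<longlongrightarrow> 0) (at w)" by simp
  qed
  then show ?thesis by (simp add: Lim_null[symmetric])
qed

lemma res_tendsto:
  assumes V: "open V" "V \<subseteq> U" "w \<in> V"
  shows "((\<lambda>z. R z y) \<longlongrightarrow> R w y) (at w)"
  using res_tendsto_comp[OF V, of "\<lambda>_. y"] by simp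

lemma res_deriv:
  assumes V: "open V" "V \<subseteq> U" "w \<in> V"
  shows "((\<lambda>z. R z y) has_derivative (\<lambda>h. cscale h (- R w (R w y)))) (at w)"
  unfolding has_derivative_iff_norm
proof (intro conjI bounded_linear_cs_left)
  have w: "w \<in> U" using V by auto
  let ?v = "R w y"
  let ?g = "\<lambda>z. 32 * cmod (w - z) * (N w)\<^sup>2 * norm ?v"
  show "((\<lambda>z. norm (R z y - R w y - cscale (z - w) (- R w (R w y))) / norm (z - w)) \<longlongrightarrow> 0) (at w)"
  proof (rule Lim_null_comparison)
    show "\<forall>\<^sub>F z in at w. norm (norm (R z y - R w y - cscale (z - w) (- R w (R w y))) / norm (z - w)) \<le> ?g z"
    proof -
      have "\<forall>\<^sub>F z in at w. z \<noteq> w" by (simp add: eventually_at_filter)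
      with eventually_near[OF V]
      show ?thesis
    proof eventually_elim
      case (elim z)
      then have z: "z \<in> U" and c: "8 * cmod (w - z) * (N w + 1) \<le> 1" and zw: "z \<noteq> w" by auto
      have eq: "R z y - R w y - cscale (z - w) (- R w ?v) = cscale (w - z) (R z ?v - R w ?v)"
      proof -
        show ?thesis by (subst res_identity[OF z w]) (simp add: cs_swap[of z w] cs_diff cs_minus)
      qed
      have "norm (cscale (w - z) (R z ?v - R w ?v)) \<le> 4 * cmod (w - z) * (8 * cmod (w - z) * (N w)\<^sup>2 * norm ?v)"
        by (rule order.trans[OF norm_cs]) (intro mult_left_mono res_lip[OF z w c], auto)
      then have "norm (cscale (w - z) (R z ?v - R w ?v)) / cmod (z - w) \<le> ?g z"
        using zw by (simp add: divide_simps norm_minus_commute) (simp add: algebra_simps power2_eq_square)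
      then show ?case by (simp add: eq)
    qed
    qed
    have "(?g \<longlongrightarrow> 32 * cmod (w - w) * (N w)\<^sup>2 * norm ?v) (at w)"
      by (intro tendsto_intros)
    then show "(?g \<longlongrightarrow> 0) (at w)" by simp
  qed
qed

end



locale punct = opsetting A D for A :: "'r::banach \<times> 'r \<Rightarrow> 'r \<times> 'r" and D +
  fixes l0 :: complex and e0 :: real
  assumes e0: "0 < e0" and sub: "ball l0 e0 - {l0} \<subseteq> resolvent_set A D"
begin

definition "V = ball l0 e0 - {l0}"
lemma V_open: "open V" unfolding V_def by (simp add: open_Diff)
lemma V_sub: "V \<subseteq> U" using sub V_def by simp

definition ee :: "real \<Rightarrow> complex" where "ee t = exp (2 * of_real pi * \<i> * of_real t)"
definition gam :: "real \<Rightarrow> real \<Rightarrow> complex" where "gam \<rho> t = l0 + of_real \<rho> * ee t"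

lemma norm_ee[simp]: "cmod (ee t) = 1" by (simp add: ee_def norm_exp_eq_Re)
lemma ee_nz[simp]: "ee t \<noteq> 0" by (simp add: ee_def)
lemma gam_l0: "gam \<rho> t - l0 = of_real \<rho> * ee t" by (simp add: gam_def)
lemma norm_gam: "cmod (gam \<rho> t - l0) = \<bar>\<rho>\<bar>" by (simp add: gam_l0 norm_mult)
lemma gam_V: "0 < \<rho> \<Longrightarrow> \<rho> < e0 \<Longrightarrow> gam \<rho> t \<in> V"
  unfolding V_def using norm_gam[of \<rho> t] by (auto simp: dist_norm norm_minus_commute)
lemma gam_circ: "gam \<rho> = circlepath l0 \<rho>" by (simp add: circlepath gam_def ee_def fun_eq_iff)
lemma gam_01: "gam \<rho> 1 = gam \<rho> 0" by (simp add: gam_def ee_def)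

lemma gam_deriv_rho: "((\<lambda>\<rho>. gam \<rho> t) has_vector_derivative ee t) (at \<rho> within S)"
  unfolding gam_def by (auto intro!: derivative_eq_intros simp: has_vector_derivative_def scaleR_conv_of_real)
lemma gam_deriv_t: "(gam \<rho> has_vector_derivative (2 * pi * \<i> * \<rho> * ee t)) (at t within S)"
  unfolding gam_circ ee_def by (rule has_vector_derivative_circlepath)
lemma gam_cont: "continuous_on S (\<lambda>(\<rho>, t). gam \<rho> t)"
  unfolding gam_def ee_def by (auto intro!: continuous_intros simp: split_beta)

definition "G k x w = cscale ((w - l0) ^ Suc k) (R w x)"
definition "G' k x w = cscale (of_nat (Suc k) * (w - l0) ^ k) (R w x) + cscale ((w - l0) ^ Suc k) (- R w (R w x))"

lemma G_deriv: assumes w: "w \<in> V"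
  shows "(G k x has_derivative (\<lambda>h. cscale h (G' k x w))) (at w)"
proof -
  have p: "((\<lambda>w. (w - l0) ^ Suc k) has_derivative (*) (of_nat (Suc k) * (w - l0) ^ k)) (at w)"
  proof -
    have "((\<lambda>w. (w - l0) ^ Suc k) has_field_derivative (of_nat (Suc k) * (w - l0) ^ (Suc k - 1) * 1)) (at w)"
      by (intro DERIV_power derivative_eq_intros) auto
    then show ?thesis by (intro has_field_derivative_imp_has_derivative) simp
  qed
  have "((\<lambda>w. cscale ((w - l0) ^ Suc k) (R w x)) has_derivative
     (\<lambda>h. cscale ((w - l0) ^ Suc k) (cscale h (- R w (R w x))) + cscale (of_nat (Suc k) * (w - l0) ^ k * h) (R w x))) (at w)"
    by (rule bounded_bilinear.FDERIV[OF bounded_bilinear_cs p res_deriv[OF V_open V_sub w]])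
  then show ?thesis unfolding G_def[abs_def]
    by (rule has_derivative_eq_rhs) (simp add: fun_eq_iff G'_def cs_add cs_mult ac_simps)
qed

lemma R_cont: "continuous_on V (\<lambda>w. R w x)"
  by (rule continuous_at_imp_continuous_on) (auto simp: continuous_at intro: res_tendsto[OF V_open V_sub])
lemma RR_cont: "continuous_on V (\<lambda>w. R w (R w x))"
  by (rule continuous_at_imp_continuous_on)
     (auto simp: continuous_at intro!: res_tendsto_comp[OF V_open V_sub] res_tendsto[OF V_open V_sub])

lemma G_cont: "continuous_on V (G k x)"
  unfolding G_def[abs_def] by (intro continuous_intros R_cont)
lemma G'_cont: "continuous_on V (G' k x)"
  unfolding G'_def[abs_def] by (intro continuous_intros R_cont RR_cont)

end



context punct begin

definition "fint k x \<rho> t = G k x (gam \<rho> t)"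
definition "fdr k x \<rho> t = cscale (ee t) (G' k x (gam \<rho> t))"

lemma fint_deriv_rho: assumes "0 < \<rho>" "\<rho> < e0"
  shows "((\<lambda>\<rho>. fint k x \<rho> t) has_vector_derivative fdr k x \<rho> t) (at \<rho> within S)"
proof -
  have "((\<lambda>\<rho>. G k x (gam \<rho> t)) has_derivative (\<lambda>h. cscale (h *\<^sub>R ee t) (G' k x (gam \<rho> t)))) (at \<rho> within S)"
    by (rule has_derivative_compose[OF gam_deriv_rho[unfolded has_vector_derivative_def] G_deriv[OF gam_V[OF assms]]])
  then show ?thesis unfolding has_vector_derivative_def fint_def fdr_def
    by (rule has_derivative_eq_rhs) (simp add: cs_scaleRl fun_eq_iff)
qed

lemma fint_deriv_t: assumes "0 < \<rho>" "\<rho> < e0"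
  shows "(fint k x \<rho> has_vector_derivative cscale (2 * pi * \<i> * \<rho>) (fdr k x \<rho> t)) (at t within S)"
proof -
  have "((\<lambda>t. G k x (gam \<rho> t)) has_derivative (\<lambda>h. cscale (h *\<^sub>R (2 * pi * \<i> * \<rho> * ee t)) (G' k x (gam \<rho> t)))) (at t within S)"
    by (rule has_derivative_compose[OF gam_deriv_t[unfolded has_vector_derivative_def] G_deriv[OF gam_V[OF assms]]])
  then show ?thesis unfolding has_vector_derivative_def fint_def[abs_def] fdr_def
    by (rule has_derivative_eq_rhs) (simp add: cs_scaleRl fun_eq_iff cs_mult ac_simps)
qed

lemma fint_cont: assumes "0 < \<rho>" "\<rho> < e0" shows "continuous_on S (fint k x \<rho>)"
proof -
  have "continuous_on S (\<lambda>t. G k x (gam \<rho> t))"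
    by (rule continuous_on_compose2[OF G_cont, where f="gam \<rho>"])
       (use assms gam_V in \<open>auto simp: gam_def ee_def intro!: continuous_intros\<close>)
  then show ?thesis by (simp add: fint_def[abs_def])
qed

lemma fdr_cont: assumes "0 < a" "b < e0"
  shows "continuous_on ({a..b} \<times> S) (\<lambda>(\<rho>, t). fdr k x \<rho> t)"
proof -
  have 1: "continuous_on ({a..b} \<times> S) (\<lambda>p. G' k x (gam (fst p) (snd p)))"
    by (rule continuous_on_compose2[OF G'_cont, where f="\<lambda>p. gam (fst p) (snd p)"])
       (use assms gam_V in \<open>auto simp: gam_def ee_def intro!: continuous_intros\<close>)
  have 2: "continuous_on ({a..b} \<times> S) (\<lambda>p. ee (snd p))"
    by (auto simp: ee_def intro!: continuous_intros)
  show ?thesis unfolding fdr_def split_beta by (intro continuous_on_cs 1 2)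
qed

lemma fdr_int0: assumes "0 < \<rho>" "\<rho> < e0"
  shows "((fdr k x \<rho>) has_integral 0) {0..1}"
proof -
  have "((\<lambda>t. cscale (2 * pi * \<i> * \<rho>) (fdr k x \<rho> t)) has_integral (fint k x \<rho> 1 - fint k x \<rho> 0)) {0..1}"
    by (rule fundamental_theorem_of_calculus) (simp, rule fint_deriv_t[OF assms])
  then have "((\<lambda>t. cscale (2 * pi * \<i> * \<rho>) (fdr k x \<rho> t)) has_integral 0) {0..1}"
    by (simp add: fint_def gam_01)
  moreover have c: "inverse (2 * pi * \<i> * \<rho>) * (2 * pi * \<i> * \<rho>) = (1::complex)"
    using assms by (intro left_inverse) auto
  ultimately have "((cscale (inverse (2 * pi * \<i> * \<rho>)) \<circ> (\<lambda>t. cscale (2 * pi * \<i> * \<rho>) (fdr k x \<rho> t))) has_integral cscale (inverse (2 * pi * \<i> * \<rho>)) 0) {0..1}"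
    by (intro has_integral_linear bounded_linear_cs_right)
  then show ?thesis by (simp only: o_def cs_mult c cs_one cs_zero)
qed

lemma fint_const: assumes "0 < a" "a \<le> b" "b < e0"
  shows "integral {0..1} (fint k x a) = integral {0..1} (fint k x b)"
proof -
  have "\<exists>c. \<forall>\<rho>\<in>{a..b}. integral (cbox 0 1) (fint k x \<rho>) = c"
  proof (rule has_derivative_zero_constant)
    fix \<rho> assume r: "\<rho> \<in> {a..b}"
    then have r0: "0 < \<rho>" "\<rho> < e0" using assms by auto
    have "((\<lambda>\<rho>. integral (cbox 0 1) (fint k x \<rho>)) has_vector_derivative integral (cbox 0 1) (fdr k x \<rho>)) (at \<rho> within {a..b})"
    proof (rule leibniz_rule_vector_derivative)
      show "((\<lambda>\<rho>. fint k x \<rho> t) has_vector_derivative fdr k x \<rho>' t) (at \<rho>' within {a..b})"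
        if "\<rho>' \<in> {a..b}" "t \<in> cbox 0 1" for \<rho>' t
        using that assms by (intro fint_deriv_rho) auto
      show "fint k x \<rho>' integrable_on cbox 0 1" if "\<rho>' \<in> {a..b}" for \<rho>'
        using that assms by (intro integrable_continuous fint_cont) auto
      show "continuous_on ({a..b} \<times> cbox 0 1) (\<lambda>(\<rho>, t). fdr k x \<rho> t)"
        using assms by (intro fdr_cont)
    qed (use r in auto)
    moreover have "integral (cbox 0 1) (fdr k x \<rho>) = 0"
      using fdr_int0[OF r0] by (simp add: integral_unique)
    ultimately show "((\<lambda>\<rho>. integral (cbox 0 1) (fint k x \<rho>)) has_derivative (\<lambda>h. 0)) (at \<rho> within {a..b})"
      by (simp add: has_vector_derivative_def)
  qed simp
  then show ?thesis using assms by auto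
qed

lemma fint_has_int: assumes "0 < \<rho>" "\<rho> < e0" shows "(fint k x \<rho> has_integral integral {0..1} (fint k x \<rho>)) {0..1}"
  using assms by (intro integrable_integral integrable_continuous_interval fint_cont)

end



lemma small_zero:
  fixes v :: "'a::real_normed_vector"
  assumes c: "0 < c" and h: "\<And>\<rho>. 0 < \<rho> \<Longrightarrow> \<rho> < c \<Longrightarrow> norm v \<le> C * \<rho>"
  shows "v = 0"
proof (rule ccontr)
  assume "v \<noteq> 0"
  then have nv: "0 < norm v" by simp
  show False
  proof (cases "C \<le> 0")
    case True
    have "norm v \<le> C * (c/2)" using h[of "c/2"] c by auto
    also have "\<dots> \<le> 0" using True c by (simp add: mult_nonpos_nonneg)
    finally show False using nv by simp
  next
    case False
    define \<rho> where "\<rho> = min (c/2) (norm v / (2 * C))"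
    have r: "0 < \<rho>" "\<rho> < c" using c nv False by (auto simp: \<rho>_def)
    have "norm v \<le> C * \<rho>" by (rule h[OF r])
    also have "\<dots> \<le> C * (norm v / (2 * C))" using False by (intro mult_left_mono) (auto simp: \<rho>_def)
    also have "\<dots> = norm v / 2" using False by simp
    finally show False using nv by simp
  qed
qed

lemma int_bound01:
  fixes f :: "real \<Rightarrow> 'a::real_normed_vector"
  assumes "(f has_integral i) {0..1}" "0 \<le> C" "\<And>t. t \<in> {0..1} \<Longrightarrow> norm (f t) \<le> C"
  shows "norm i \<le> C"
  using has_integral_bound[of C f i 0 1] assms by simp

locale pole = punct A D l0 e0 for A :: "'r::banach \<times> 'r \<Rightarrow> 'r \<times> 'r" and D l0 e0 +
  fixes n :: nat and M \<delta> :: real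
  assumes \<delta>: "0 < \<delta>" "\<delta> \<le> e0" and M: "0 \<le> M"
    and bnd: "\<And>z y. 0 < cmod (z - l0) \<Longrightarrow> cmod (z - l0) < \<delta> \<Longrightarrow>
         norm (cscale ((z - l0) ^ n) (R z y)) \<le> M * norm y"
begin

lemma Rbnd: assumes "0 < cmod (z - l0)" "cmod (z - l0) < \<delta>"
  shows "norm (R z y) \<le> 4 * M * norm y / cmod (z - l0) ^ n"
proof -
  have nz: "(z - l0) ^ n \<noteq> 0" using assms by auto
  have "norm (R z y) = norm (cscale (inverse ((z - l0) ^ n)) (cscale ((z - l0) ^ n) (R z y)))"
    using nz by (simp add: cs_inv)
  also have "\<dots> \<le> 4 * cmod (inverse ((z - l0) ^ n)) * (M * norm y)"
    by (rule order.trans[OF norm_cs]) (intro mult_left_mono bnd assms, auto)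
  finally show ?thesis by (simp add: norm_inverse norm_power divide_inverse ac_simps)
qed

definition "r0 = \<delta> / 2"
lemma r0: "0 < r0" "r0 < \<delta>" "r0 < e0" using \<delta> by (auto simp: r0_def)

definition "B k x = integral {0..1} (fint k x r0)"

lemma B_int: assumes "0 < \<rho>" "\<rho> < e0" shows "(fint k x \<rho> has_integral B k x) {0..1}"
proof -
  have "integral {0..1} (fint k x \<rho>) = B k x"
  proof (cases "\<rho> \<le> r0")
    case True
    show ?thesis unfolding B_def by (rule fint_const[OF assms(1) True r0(3)])
  next
    case False
    show ?thesis unfolding B_def by (rule sym, rule fint_const[OF r0(1) _ assms(2)]) (use False in simp)
  qed
  then show ?thesis using fint_has_int[OF assms, of k x] by simp
qed

lemma fint_eq: "fint k x \<rho> t = cscale ((of_real \<rho> * ee t) ^ Suc k) (R (gam \<rho> t) x)"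
  by (simp add: fint_def G_def gam_l0)

lemma B_high: assumes "n \<le> k" shows "B k x = 0"
proof (rule small_zero[of "min \<delta> 1"])
  fix \<rho> :: real assume r: "0 < \<rho>" "\<rho> < min \<delta> 1"
  have re: "\<rho> < e0" using r \<delta> by auto
  have "norm (B k x) \<le> 16 * M * norm x * \<rho>"
  proof (rule int_bound01[OF B_int[OF r(1) re]])
    show "0 \<le> 16 * M * norm x * \<rho>" using M r by simp
    fix t :: real
    have g: "0 < cmod (gam \<rho> t - l0)" "cmod (gam \<rho> t - l0) < \<delta>" using r by (auto simp: norm_gam)
    have "norm (fint k x \<rho> t) \<le> 4 * cmod ((of_real \<rho> * ee t) ^ Suc k) * (4 * M * norm x / \<rho> ^ n)"
      unfolding fint_eq
      by (rule order.trans[OF norm_cs]) (intro mult_left_mono order.trans[OF Rbnd[OF g]], auto simp: norm_gam r(1) less_imp_le)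
    also have "\<dots> = 16 * M * norm x * (\<rho> ^ Suc k / \<rho> ^ n)"
      using r by (simp add: norm_mult norm_power)
    also have "\<rho> ^ Suc k / \<rho> ^ n = \<rho> ^ (Suc k - n)"
      using r assms by (simp add: power_diff)
    also have "\<rho> ^ (Suc k - n) \<le> \<rho> ^ 1"
      using r assms by (intro power_decreasing) auto
    finally show "norm (fint k x \<rho> t) \<le> 16 * M * norm x * \<rho>"
      using M by (simp add: mult_left_mono)
  qed
  then show "norm (B k x) \<le> (16 * M * norm x) * \<rho>" by simp
qed (use \<delta> in auto)

end



lemma cs_negl: "cscale (- c) v = - cscale c (v::'r::real_vector \<times> 'r)"
  by (simp add: cscale_def prod_eq_iff algebra_simps)

lemma geo_id:
  fixes s a :: complex assumes "a \<noteq> 0" "s \<noteq> a"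
  shows "s / (s - a) = - (\<Sum>k<m. s ^ Suc k / a ^ Suc k) + s ^ Suc m / (a ^ m * (s - a))"
proof (induction m)
  case 0 then show ?case using assms by simp
next
  case (Suc m)
  obtain c where c: "s = a + c" "c \<noteq> 0" using assms by (metis add_diff_cancel_left' diff_eq_eq eq_iff_diff_eq_0)
  have "s ^ Suc (Suc m) / (a ^ Suc m * (s - a)) - s ^ Suc m / (a ^ m * (s - a)) = s ^ Suc m / a ^ Suc m"
    unfolding c(1) using assms c by (simp add: field_simps power_Suc)
  then show ?case using Suc by (simp add: algebra_simps)
qed

context punct begin

lemma wind: assumes r: "0 < \<rho>" and nd: "cmod (z0 - l0) \<noteq> \<rho>"
  shows "((\<lambda>t. of_real \<rho> * ee t / (gam \<rho> t - z0)) has_integral (if cmod (z0 - l0) < \<rho> then 1 else 0)) {0..1}"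
proof -
  define I where "I = (if cmod (z0 - l0) < \<rho> then 1 else 0) * (2 * of_real pi * \<i>)"
  have ci: "((\<lambda>w. 1 / (w - z0)) has_contour_integral I) (circlepath l0 \<rho>)"
  proof (cases "cmod (z0 - l0) < \<rho>")
    case True
    then show ?thesis using Cauchy_integral_circlepath_simple[of "\<lambda>_. 1" l0 \<rho> z0]
      by (simp add: I_def)
  next
    case False
    then have lt: "\<rho> < cmod (z0 - l0)" using nd by simp
    have "((\<lambda>w. 1 / (w - z0)) has_contour_integral 0) (circlepath l0 \<rho>)"
    proof (rule Cauchy_theorem_disc_simple[of _ l0 "cmod (z0 - l0)"])
      show "(\<lambda>w. 1 / (w - z0)) holomorphic_on ball l0 (cmod (z0 - l0))"
        by (intro holomorphic_intros) (auto simp: dist_norm norm_minus_commute)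
      show "path_image (circlepath l0 \<rho>) \<subseteq> ball l0 (cmod (z0 - l0))"
        using r lt by (auto simp: sphere_def)
    qed auto
    then show ?thesis using False by (simp add: I_def)
  qed
  then have "((\<lambda>t. 1 / (circlepath l0 \<rho> t - z0) * (2 * pi * \<i> * \<rho> * ee t)) has_integral I) {0..1}"
    unfolding has_contour_integral vector_derivative_circlepath ee_def .
  from has_integral_mult_right[OF this, of "inverse (2 * pi * \<i>)"]
  have "((\<lambda>t. inverse (2 * pi * \<i>) * (1 / (circlepath l0 \<rho> t - z0) * (2 * pi * \<i> * \<rho> * ee t))) has_integral inverse (2 * pi * \<i>) * I) {0..1}" .
  then show ?thesis
    by (rule has_integral_eq_rhs[OF has_integral_cong[THEN iffD1, rotated]])
       (auto simp: I_def gam_circ[symmetric] field_simps)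
qed

end

context pole begin

lemma repr:
  assumes d: "0 < cmod (z0 - l0)" "cmod (z0 - l0) < r0 / 2"
  shows "norm (R z0 x - (\<Sum>k<n. cscale (inverse ((z0 - l0) ^ Suc k)) (B k x))) \<le> 32 * M / r0 ^ n * norm x"
proof -
  define a where "a = z0 - l0"
  define d where "d = cmod a"
  define y where "y = R z0 x"
  have a0: "a \<noteq> 0" and d0: "0 < d" and dr: "d < r0 / 2" using d by (auto simp: a_def d_def)
  have z0V: "z0 \<in> V" using d r0 by (auto simp: V_def dist_norm norm_minus_commute)
  have z0U: "z0 \<in> U" using z0V V_sub by auto
  define wf where "wf \<rho> t = of_real \<rho> * ee t / (gam \<rho> t - z0)" for \<rho> t
  define hf where "hf \<rho> t = cscale (wf \<rho> t) (R (gam \<rho> t) x)" for \<rho> t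
  have gz: "gam \<rho> t \<noteq> z0" if "\<rho> \<noteq> d" "0 < \<rho>" for \<rho> t
    using that norm_gam[of \<rho> t] by (auto simp: d_def a_def)
  have hf_eq: "hf \<rho> t = cscale (wf \<rho> t) y - fint 0 y \<rho> t" if r: "0 < \<rho>" "\<rho> < e0" "\<rho> \<noteq> d" for \<rho> t
  proof -
    let ?w = "gam \<rho> t"
    have wU: "?w \<in> U" using gam_V[OF r(1,2)] V_sub by auto
    have e1: "R ?w x = y + cscale (z0 - ?w) (R ?w y)" unfolding y_def by (rule res_identity[OF wU z0U])
    have e2: "wf \<rho> t * (z0 - ?w) = - (of_real \<rho> * ee t)"
      using gz[OF r(3,1)] by (simp add: wf_def field_simps)
    show ?thesis
      unfolding hf_def e1 cs_add cs_mult e2 cs_negl by (simp add: fint_def G_def gam_l0)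
  qed
  have hf_int: "(hf \<rho> has_integral cscale (if d < \<rho> then 1 else 0) y - B 0 y) {0..1}"
    if r: "0 < \<rho>" "\<rho> < e0" "\<rho> \<noteq> d" for \<rho>
  proof -
    have "((\<lambda>t. cscale (wf \<rho> t) y) has_integral cscale (if d < \<rho> then 1 else 0) y) {0..1}"
      using has_integral_linear[OF wind[OF r(1), of z0] bounded_linear_cs_left[of y]] r(3)
      by (simp add: o_def wf_def d_def a_def)
    from has_integral_diff[OF this B_int[OF r(1,2), of 0 y]]
    show ?thesis by (rule has_integral_eq[rotated]) (simp add: hf_eq[OF r])
  qed
  define Z where "Z = (\<Sum>k<n. cscale (inverse (a ^ Suc k)) (B k x)) - B 0 y"
  have "cscale (a ^ n) Z = 0"
  proof (rule small_zero[of "d / 2"])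
    show "0 < d / 2" using d0 by simp
    fix \<rho> :: real assume r: "0 < \<rho>" "\<rho> < d / 2"
    have r': "\<rho> < e0" "\<rho> \<noteq> d" "\<rho> < \<delta>" using r dr r0 by auto
    define tf where "tf t = cscale ((of_real \<rho> * ee t) ^ Suc n / (gam \<rho> t - z0)) (R (gam \<rho> t) x)" for t
    have tf_eq: "tf t = cscale (a ^ n) (hf \<rho> t + (\<Sum>k<n. cscale (inverse (a ^ Suc k)) (fint k x \<rho> t)))" for t
    proof -
      let ?s = "of_real \<rho> * ee t"
      have sa: "gam \<rho> t - z0 = ?s - a" by (simp add: gam_def a_def)
      have sna: "?s \<noteq> a" using gz[OF r'(2) r(1), of t] sa by auto
      have "hf \<rho> t + (\<Sum>k<n. cscale (inverse (a ^ Suc k)) (fint k x \<rho> t))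
          = cscale (wf \<rho> t + (\<Sum>k<n. ?s ^ Suc k / a ^ Suc k)) (R (gam \<rho> t) x)"
        by (simp add: hf_def fint_eq cs_mult cs_addl cs_suml divide_inverse ac_simps)
      also have "wf \<rho> t + (\<Sum>k<n. ?s ^ Suc k / a ^ Suc k) = ?s ^ Suc n / (a ^ n * (?s - a))"
        unfolding wf_def sa geo_id[OF a0 sna, of n] by simp
      finally show ?thesis using a0 by (simp add: tf_def cs_mult sa)
    qed
    have tf_int: "(tf has_integral cscale (a ^ n) Z) {0..1}"
    proof -
      have "((\<lambda>t. hf \<rho> t + (\<Sum>k<n. cscale (inverse (a ^ Suc k)) (fint k x \<rho> t))) has_integral
             (- B 0 y + (\<Sum>k<n. cscale (inverse (a ^ Suc k)) (B k x)))) {0..1}"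
      proof (rule has_integral_add)
        show "(hf \<rho> has_integral - B 0 y) {0..1}" using hf_int[OF r(1) r'(1,2)] r dr by simp
        show "((\<lambda>t. \<Sum>k<n. cscale (inverse (a ^ Suc k)) (fint k x \<rho> t)) has_integral
               (\<Sum>k<n. cscale (inverse (a ^ Suc k)) (B k x))) {0..1}"
          by (intro has_integral_sum finite_lessThan ballI)
             (rule has_integral_linear[OF B_int[OF r(1) r'(1)] bounded_linear_cs_right, unfolded o_def])
      qed
      from has_integral_linear[OF this bounded_linear_cs_right[of "a ^ n"]]
      show ?thesis by (simp add: o_def tf_eq[abs_def] Z_def algebra_simps)
    qed
    show "norm (cscale (a ^ n) Z) \<le> (8 * M * norm x / d) * \<rho>"
    proof (rule int_bound01[OF tf_int])
      show "0 \<le> 8 * M * norm x / d * \<rho>" using M d0 r by simp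
      fix t :: real
      let ?s = "of_real \<rho> * ee t"
      have g: "0 < cmod (gam \<rho> t - l0)" "cmod (gam \<rho> t - l0) < \<delta>" using r r' by (auto simp: norm_gam)
      have ws: "cmod (gam \<rho> t - z0) \<ge> d - \<rho>"
      proof -
        have "cmod (gam \<rho> t - z0) = cmod (a - (gam \<rho> t - l0))" by (simp add: a_def norm_minus_commute)
        also have "\<dots> \<ge> cmod a - cmod (gam \<rho> t - l0)" by (rule norm_triangle_ineq2)
        finally show ?thesis using r by (simp add: norm_gam d_def)
      qed
      have dr2: "d / 2 \<le> d - \<rho>" using r by simp
      have tf2: "tf t = cscale (?s / (gam \<rho> t - z0)) (cscale ((gam \<rho> t - l0) ^ n) (R (gam \<rho> t) x))"
        by (simp add: tf_def cs_mult gam_l0 power_Suc ac_simps)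
      have "norm (tf t) \<le> 4 * cmod (?s / (gam \<rho> t - z0)) * (M * norm x)"
        unfolding tf2 by (rule order.trans[OF norm_cs]) (intro mult_left_mono bnd g, auto)
      also have "cmod (?s / (gam \<rho> t - z0)) \<le> \<rho> / (d / 2)"
      proof -
        have "cmod (?s / (gam \<rho> t - z0)) = \<rho> / cmod (gam \<rho> t - z0)" using r by (simp add: norm_divide norm_mult)
        also have "\<dots> \<le> \<rho> / (d / 2)" using r d0 ws dr2 by (intro divide_left_mono) (auto intro!: mult_pos_pos)
        finally show ?thesis .
      qed
      then have "4 * cmod (?s / (gam \<rho> t - z0)) * (M * norm x) \<le> 4 * (\<rho> / (d / 2)) * (M * norm x)"
        using M by (intro mult_right_mono mult_left_mono) auto
      finally show "norm (tf t) \<le> 8 * M * norm x / d * \<rho>" by (simp add: field_simps)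
    qed
  qed
  then have Z0: "Z = 0" using a0 cs_inv[of "a ^ n" Z] by simp
  have H: "(hf r0 has_integral y - B 0 y) {0..1}" using hf_int[of r0] r0 dr d0 by simp
  have "norm (y - B 0 y) \<le> 32 * M / r0 ^ n * norm x"
  proof (rule int_bound01[OF H])
    show "0 \<le> 32 * M / r0 ^ n * norm x" using M r0 by simp
    fix t :: real
    have g: "0 < cmod (gam r0 t - l0)" "cmod (gam r0 t - l0) < \<delta>" using r0 by (auto simp: norm_gam)
    have ws: "cmod (gam r0 t - z0) \<ge> r0 - d"
    proof -
      have "cmod (gam r0 t - z0) = cmod ((gam r0 t - l0) - a)" by (simp add: a_def)
      also have "\<dots> \<ge> cmod (gam r0 t - l0) - cmod a" by (rule norm_triangle_ineq2)
      finally show ?thesis using r0 by (simp add: norm_gam d_def)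
    qed
    have wfb: "cmod (wf r0 t) \<le> 2"
    proof -
      have "cmod (wf r0 t) = r0 / cmod (gam r0 t - z0)" using r0 by (simp add: wf_def norm_divide norm_mult)
      also have "\<dots> \<le> r0 / (r0 / 2)" using r0 ws dr by (intro divide_left_mono) (auto intro!: mult_pos_pos)
      finally show ?thesis using r0 by simp
    qed
    have "norm (hf r0 t) \<le> 4 * cmod (wf r0 t) * (4 * M * norm x / cmod (gam r0 t - l0) ^ n)"
      unfolding hf_def by (rule order.trans[OF norm_cs]) (intro mult_left_mono Rbnd g, auto)
    also have "\<dots> = 4 * cmod (wf r0 t) * (4 * M * norm x / r0 ^ n)"
      using r0 by (simp add: norm_gam)
    also have "\<dots> \<le> 4 * 2 * (4 * M * norm x / r0 ^ n)"
      using wfb M r0 by (intro mult_right_mono mult_left_mono) auto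
    finally show "norm (hf r0 t) \<le> 32 * M / r0 ^ n * norm x" by simp
  qed
  moreover have "R z0 x - (\<Sum>k<n. cscale (inverse ((z0 - l0) ^ Suc k)) (B k x)) = y - B 0 y"
    using Z0 by (simp add: Z_def y_def a_def)
  ultimately show ?thesis by simp
qed

end



context opsetting begin

lemma closed_lim:
  assumes F: "F \<noteq> bot" and ev: "\<forall>\<^sub>F z in F. v z \<in> D"
    and lv: "(v \<longlongrightarrow> p) F" and la: "((\<lambda>z. A (v z)) \<longlongrightarrow> q) F"
  shows "p \<in> D \<and> A p = q"
proof -
  have "(p, q) \<in> {(u, A u) |u. u \<in> D}"
  proof (rule Lim_in_closed_set)
    show "closed {(u, A u) |u. u \<in> D}" using clo by (simp add: closed_op_def)
    show "\<forall>\<^sub>F z in F. (v z, A (v z)) \<in> {(u, A u) |u. u \<in> D}" using ev by eventually_elim blast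
    show "((\<lambda>z. (v z, A (v z))) \<longlongrightarrow> (p, q)) F" by (intro tendsto_Pair lv la)
  qed (rule F)
  then show ?thesis by auto
qed

lemma phi_props:
  assumes "\<phi> \<in> adj_eigenspace A D l0"
  shows "bounded_linear \<phi>" "\<And>c f. \<phi> (cscale c f) = c * \<phi> f" "\<And>u. u \<in> D \<Longrightarrow> \<phi> (A u) = l0 * \<phi> u"
  using assms by (auto simp: adj_eigenspace_def adjoint_rel_def dual_functional_def)

lemma phi_res:
  assumes \<phi>: "\<phi> \<in> adj_eigenspace A D l0" and z: "z \<in> U" and zl: "z \<noteq> l0"
  shows "\<phi> (R z x) = \<phi> x / (z - l0)"
proof -
  note p = phi_props[OF \<phi>]
  have "\<phi> x = \<phi> (cscale z (R z x) - A (R z x))" using res_eq[OF z] by simp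
  also have "\<dots> = z * \<phi> (R z x) - l0 * \<phi> (R z x)"
    using linear_diff[OF bounded_linear.linear[OF p(1)]] p(2) p(3)[OF res_D[OF z]] by simp
  finally show ?thesis using zl by (simp add: field_simps)
qed

end

context pole begin

lemma B_add: "B k (x + y) = B k x + B k y"
proof -
  have "(fint k (x + y) r0 has_integral B k x + B k y) {0..1}"
  proof (rule has_integral_eq[OF _ has_integral_add[OF B_int[OF r0(1,3)] B_int[OF r0(1,3)]]])
    fix t
    have "gam r0 t \<in> U" using gam_V[OF r0(1,3)] V_sub by auto
    then show "fint k x r0 t + fint k y r0 t = fint k (x + y) r0 t"
      by (simp add: fint_eq linear_add[OF bounded_linear.linear[OF res_bl]] cs_add)
  qed
  then show ?thesis using B_int[OF r0(1,3), of k "x + y"] by (rule has_integral_unique[symmetric])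
qed

lemma B_cs: "B k (cscale c x) = cscale c (B k x)"
proof -
  have "(fint k (cscale c x) r0 has_integral cscale c (B k x)) {0..1}"
  proof (rule has_integral_eq[OF _ has_integral_linear[OF B_int[OF r0(1,3)] bounded_linear_cs_right, unfolded o_def]])
    fix t
    have "gam r0 t \<in> U" using gam_V[OF r0(1,3)] V_sub by auto
    then show "cscale c (fint k x r0 t) = fint k (cscale c x) r0 t"
      by (simp add: fint_eq res_cs cs_comm)
  qed
  then show ?thesis using B_int[OF r0(1,3), of k "cscale c x"] by (rule has_integral_unique[symmetric])
qed

lemma B_bound: "norm (B 0 x) \<le> 16 * M * r0 / r0 ^ n * norm x"
proof (rule int_bound01[OF B_int[OF r0(1,3)]])
  show "0 \<le> 16 * M * r0 / r0 ^ n * norm x" using M r0 by simp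
  fix t :: real
  have g: "0 < cmod (gam r0 t - l0)" "cmod (gam r0 t - l0) < \<delta>" using r0 by (auto simp: norm_gam)
  have "norm (fint 0 x r0 t) \<le> 4 * cmod ((of_real r0 * ee t) ^ Suc 0) * (4 * M * norm x / cmod (gam r0 t - l0) ^ n)"
    unfolding fint_eq by (rule order.trans[OF norm_cs]) (intro mult_left_mono Rbnd g, auto)
  also have "\<dots> = 16 * M * r0 / r0 ^ n * norm x" using r0 by (simp add: norm_gam norm_mult)
  finally show "norm (fint 0 x r0 t) \<le> 16 * M * r0 / r0 ^ n * norm x" .
qed

lemma B_bl: "bounded_linear (B 0)"
proof (rule bounded_linear_intro[of _ "16 * M * r0 / r0 ^ n"])
  show "B 0 (x + y) = B 0 x + B 0 y" for x y by (rule B_add)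
  show "B 0 (r *\<^sub>R x) = r *\<^sub>R B 0 x" for r x using B_cs[of 0 "of_real r" x] by (simp add: cs_of_real)
  show "norm (B 0 x) \<le> norm x * (16 * M * r0 / r0 ^ n)" for x using B_bound[of x] by (simp add: ac_simps)
qed

lemma ev_small: "\<forall>\<^sub>F z in at l0. 0 < cmod (z - l0) \<and> cmod (z - l0) < r0 / 2 \<and> z \<in> V"
  unfolding eventually_at using r0 \<delta>
  by (intro exI[of _ "r0 / 2"]) (auto simp: dist_norm V_def norm_minus_commute)

lemma B_lim:
  assumes hi: "\<And>k. m < k \<Longrightarrow> B k x = 0"
  shows "((\<lambda>z. cscale ((z - l0) ^ Suc m) (R z x)) \<longlongrightarrow> B m x) (at l0)"
proof -
  define Mp where "Mp = 32 * M / r0 ^ n"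
  define P where "P z = (\<Sum>k<n. cscale (if k \<le> m then (z - l0) ^ (m - k) else 0) (B k x))" for z
  have eq: "cscale ((z - l0) ^ Suc m) (R z x) - P z
        = cscale ((z - l0) ^ Suc m) (R z x - (\<Sum>k<n. cscale (inverse ((z - l0) ^ Suc k)) (B k x)))"
    if "z \<noteq> l0" for z
  proof -
    have "cscale ((z - l0) ^ Suc m) (\<Sum>k<n. cscale (inverse ((z - l0) ^ Suc k)) (B k x)) = P z"
      unfolding cs_sum P_def
    proof (rule sum.cong[OF refl])
      fix k assume "k \<in> {..<n}"
      show "cscale ((z - l0) ^ Suc m) (cscale (inverse ((z - l0) ^ Suc k)) (B k x))
          = cscale (if k \<le> m then (z - l0) ^ (m - k) else 0) (B k x)"
      proof (cases "k \<le> m")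
        case True
        have "(z - l0) ^ Suc m * inverse ((z - l0) ^ Suc k) = (z - l0) ^ (m - k)"
          using that True by (simp add: power_diff[symmetric] divide_inverse[symmetric])
        then show ?thesis using True by (simp add: cs_mult)
      next
        case False then show ?thesis using hi[of k] by simp
      qed
    qed
    then show ?thesis by (simp add: cs_diff)
  qed
  have "((\<lambda>z. (cscale ((z - l0) ^ Suc m) (R z x) - P z) + P z) \<longlongrightarrow> 0 + P l0) (at l0)"
  proof (rule tendsto_add)
    show "((\<lambda>z. cscale ((z - l0) ^ Suc m) (R z x) - P z) \<longlongrightarrow> 0) (at l0)"
    proof (rule Lim_null_comparison)
      show "\<forall>\<^sub>F z in at l0. norm (cscale ((z - l0) ^ Suc m) (R z x) - P z) \<le> 4 * cmod (z - l0) ^ Suc m * (Mp * norm x)"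
        using ev_small
      proof eventually_elim
        case (elim z)
        then have zl: "z \<noteq> l0" by auto
        have r: "norm (R z x - (\<Sum>k<n. cscale (inverse ((z - l0) ^ Suc k)) (B k x))) \<le> Mp * norm x"
          unfolding Mp_def using elim by (intro repr) auto
        show ?case unfolding eq[OF zl]
          by (rule order.trans[OF norm_cs], simp only: norm_power) (intro mult_left_mono r, simp)
      qed
      have "((\<lambda>z. 4 * cmod (z - l0) ^ Suc m * (Mp * norm x)) \<longlongrightarrow> 4 * cmod (l0 - l0) ^ Suc m * (Mp * norm x)) (at l0)"
        by (intro tendsto_intros)
      then show "((\<lambda>z. 4 * cmod (z - l0) ^ Suc m * (Mp * norm x)) \<longlongrightarrow> 0) (at l0)" by simp
    qed
    have "continuous_on UNIV P" unfolding P_def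
      apply (intro continuous_intros)
      subgoal for k by (cases "k \<le> m") (auto intro!: continuous_intros)
      done
    then show "(P \<longlongrightarrow> P l0) (at l0)" by (simp add: continuous_on_def)
  qed
  moreover have "P l0 = B m x"
  proof (cases "m < n")
    case True
    have "P l0 = (\<Sum>k<n. if k = m then B k x else 0)"
      unfolding P_def by (rule sum.cong) (auto simp: le_less power_0_left)
    then show ?thesis using True by simp
  next
    case False
    have "P l0 = (\<Sum>k<n. 0)" unfolding P_def by (rule sum.cong) (use False in \<open>auto simp: power_0_left\<close>)
    then show ?thesis using False B_high[of m x] by simp
  qed
  ultimately show ?thesis by simp
qed

end



locale pole2 = pole A D l0 e0 n M \<delta> for A :: "'r::banach \<times> 'r \<Rightarrow> 'r \<times> 'r" and D l0 e0 n M \<delta> +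
  fixes u :: "'r \<times> 'r" and \<phi> :: "'r \<times> 'r \<Rightarrow> complex"
  assumes ker: "eigenspace_op A D l0 = range (\<lambda>c. cscale c u)"
    and phi: "\<phi> \<in> adj_eigenspace A D l0" and phiu: "\<phi> u \<noteq> 0"
begin

lemma at_l0_nb: "at l0 \<noteq> (bot :: complex filter)" by simp

lemma ev_V: "\<forall>\<^sub>F z in at l0. z \<in> V \<and> z \<noteq> l0"
  using ev_small by eventually_elim (auto simp: V_def)

lemma B_ker:
  assumes hi: "\<And>k. m < k \<Longrightarrow> B k x = 0"
  shows "B m x \<in> eigenspace_op A D l0"
proof -
  define v where "v z = cscale ((z - l0) ^ Suc m) (R z x)" for z
  have lv: "(v \<longlongrightarrow> B m x) (at l0)" unfolding v_def by (rule B_lim[OF hi])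
  have evD: "\<forall>\<^sub>F z in at l0. v z \<in> D"
    using ev_V by eventually_elim (use V_sub in \<open>auto simp: v_def intro!: D_cs res_D\<close>)
  have evA: "\<forall>\<^sub>F z in at l0. cscale z (v z) - cscale ((z - l0) ^ Suc m) x = A (v z)"
    using ev_V
  proof eventually_elim
    case (elim z)
    then have z: "z \<in> U" using V_sub by auto
    have "A (R z x) = cscale z (R z x) - x" using res_eq[OF z, of x] by (simp add: algebra_simps)
    then show ?case by (simp add: v_def A_cs[OF res_D[OF z]] cs_diff cs_comm)
  qed
  have "((\<lambda>z. cscale z (v z) - cscale ((z - l0) ^ Suc m) x) \<longlongrightarrow> cscale l0 (B m x) - cscale ((l0 - l0) ^ Suc m) x) (at l0)"
    by (intro tendsto_intros lv)
  from Lim_transform_eventually[OF this evA]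
  have la: "((\<lambda>z. A (v z)) \<longlongrightarrow> cscale l0 (B m x)) (at l0)" by simp
  from closed_lim[OF at_l0_nb evD lv la]
  show ?thesis by (simp add: eigenspace_op_def)
qed

lemma phi_B:
  assumes hi: "\<And>k. m < k \<Longrightarrow> B k x = 0"
  shows "\<phi> (B m x) = 0 ^ m * \<phi> x"
proof -
  note p = phi_props[OF phi]
  define v where "v z = cscale ((z - l0) ^ Suc m) (R z x)" for z
  have l1: "((\<lambda>z. \<phi> (v z)) \<longlongrightarrow> \<phi> (B m x)) (at l0)"
    unfolding v_def by (rule bounded_linear.tendsto[OF p(1) B_lim[OF hi]])
  have ev: "\<forall>\<^sub>F z in at l0. (z - l0) ^ m * \<phi> x = \<phi> (v z)"
    using ev_V
  proof eventually_elim
    case (elim z)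
    then have z: "z \<in> U" "z \<noteq> l0" using V_sub by auto
    show ?case unfolding v_def p(2) phi_res[OF phi z] using z(2) by (simp add: field_simps)
  qed
  have "((\<lambda>z. (z - l0) ^ m * \<phi> x) \<longlongrightarrow> (l0 - l0) ^ m * \<phi> x) (at l0)" by (intro tendsto_intros)
  from Lim_transform_eventually[OF this ev]
  have l2: "((\<lambda>z. \<phi> (v z)) \<longlongrightarrow> 0 ^ m * \<phi> x) (at l0)" by simp
  show ?thesis using tendsto_unique[OF at_l0_nb l1 l2] .
qed

lemma B_zero1:
  assumes m: "1 \<le> m" and hi: "\<And>k. m < k \<Longrightarrow> B k x = 0"
  shows "B m x = 0"
proof -
  obtain c where c: "B m x = cscale c u" using B_ker[OF hi] ker by auto
  have "\<phi> (B m x) = 0" using phi_B[of m x, OF hi] m by (simp add: power_0_left)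
  then have "c * \<phi> u = 0" using phi_props(2)[OF phi] c by simp
  then have "c = 0" using phiu by simp
  then show ?thesis using c by simp
qed

lemma B_all: assumes "1 \<le> m" shows "B m x = 0"
proof -
  have "\<forall>m. n - j \<le> m \<longrightarrow> 1 \<le> m \<longrightarrow> B m x = 0" for j
  proof (induction j)
    case 0 then show ?case using B_high by auto
  next
    case (Suc j)
    show ?case
    proof (intro allI impI)
      fix m assume m: "n - Suc j \<le> m" "1 \<le> m"
      show "B m x = 0"
      proof (cases "n - j \<le> m")
        case True then show ?thesis using Suc m by auto
      next
        case False
        show ?thesis
        proof (rule B_zero1[OF m(2)])
          fix k assume "m < k"
          then have "n - j \<le> k" "1 \<le> k" using m False by auto
          then show "B k x = 0" using Suc.IH by auto
        qed
      qed
    qed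
  qed
  from this[of n] show ?thesis using assms by simp
qed

lemma sum_B: "(\<Sum>k<n. cscale (inverse (a ^ Suc k)) (B k x)) = cscale (inverse a) (B 0 x)"
proof (cases "n = 0")
  case True then show ?thesis using B_high[of 0 x] by simp
next
  case False
  have "(\<Sum>k<n. cscale (inverse (a ^ Suc k)) (B k x)) = (\<Sum>k<n. if k = 0 then cscale (inverse a) (B 0 x) else 0)"
    by (rule sum.cong) (auto simp: B_all)
  then show ?thesis using False by simp
qed

lemma main_bound:
  assumes "0 < cmod (z - l0)" "cmod (z - l0) < r0 / 2"
  shows "norm (cscale (z - l0) (R z x) - B 0 x) \<le> 4 * cmod (z - l0) * (32 * M / r0 ^ n * norm x)"
proof -
  have nz: "z - l0 \<noteq> 0" using assms by auto
  have "cscale (z - l0) (R z x) - B 0 x = cscale (z - l0) (R z x - (\<Sum>k<n. cscale (inverse ((z - l0) ^ Suc k)) (B k x)))"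
    using nz by (simp only: sum_B) (simp add: cs_diff cs_mult)
  also have "norm \<dots> \<le> 4 * cmod (z - l0) * (32 * M / r0 ^ n * norm x)"
    by (rule order.trans[OF norm_cs]) (intro mult_left_mono repr assms, simp)
  finally show ?thesis .
qed

lemma first_lim: "((\<lambda>z. Blinfun (\<lambda>y. cscale (z - l0) (R z y))) \<longlongrightarrow> Blinfun (B 0)) (at l0)"
proof -
  define C where "C = 4 * (32 * M / r0 ^ n)"
  have C: "0 \<le> C" using M r0 by (simp add: C_def)
  have "((\<lambda>z. Blinfun (\<lambda>y. cscale (z - l0) (R z y)) - Blinfun (B 0)) \<longlongrightarrow> 0) (at l0)"
  proof (rule Lim_null_comparison)
    show "\<forall>\<^sub>F z in at l0. norm (Blinfun (\<lambda>y. cscale (z - l0) (R z y)) - Blinfun (B 0)) \<le> C * cmod (z - l0)"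
      using ev_small
    proof eventually_elim
      case (elim z)
      then have z: "z \<in> U" using V_sub by auto
      have bl: "bounded_linear (\<lambda>y. cscale (z - l0) (R z y))"
        using bounded_linear_compose[OF bounded_linear_cs_right res_bl[OF z]] by (simp add: o_def)
      show ?case
      proof (rule norm_blinfun_bound)
        show "0 \<le> C * cmod (z - l0)" using C by simp
        fix y
        show "norm (blinfun_apply (Blinfun (\<lambda>y. cscale (z - l0) (R z y)) - Blinfun (B 0)) y) \<le> C * cmod (z - l0) * norm y"
          using main_bound[of z y] elim
          by (simp add: blinfun.diff_left bounded_linear_Blinfun_apply[OF bl] bounded_linear_Blinfun_apply[OF B_bl] C_def ac_simps)
      qed
    qed
    have "((\<lambda>z. C * cmod (z - l0)) \<longlongrightarrow> C * cmod (l0 - l0)) (at l0)" by (intro tendsto_intros)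
    then show "((\<lambda>z. C * cmod (z - l0)) \<longlongrightarrow> 0) (at l0)" by simp
  qed
  then show ?thesis by (simp add: Lim_null[symmetric])
qed

lemma P_ker: "B 0 x \<in> eigenspace_op A D l0"
  by (rule B_ker) (simp add: B_all)

lemma P_phi: "\<phi> (B 0 x) = \<phi> x"
  using phi_B[of 0 x] B_all by simp

lemma u_ker: "u \<in> eigenspace_op A D l0" using ker by (metis cs_one rangeI)

lemma P_u: "B 0 u = u"
proof -
  have uD: "u \<in> D" and ue: "cscale l0 u - A u = 0" using u_ker by (auto simp: eigenspace_op_def)
  have l1: "((\<lambda>z. cscale ((z - l0) ^ Suc 0) (R z u)) \<longlongrightarrow> B 0 u) (at l0)"
    by (rule B_lim) (simp add: B_all)
  have ev: "\<forall>\<^sub>F z in at l0. u = cscale ((z - l0) ^ Suc 0) (R z u)"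
    using ev_V
  proof eventually_elim
    case (elim z)
    then have z: "z \<in> U" "z \<noteq> l0" using V_sub by auto
    have "R z u = cscale (inverse (z - l0)) u"
    proof (rule res_unique[OF z(1) D_cs[OF uD]])
      have h: "cscale z u - A u = cscale (z - l0) u" using ue by (simp add: cs_diffl algebra_simps)
      have "cscale z (cscale (inverse (z - l0)) u) - A (cscale (inverse (z - l0)) u) = cscale (inverse (z - l0)) (cscale z u - A u)"
        by (simp add: A_cs[OF uD] cs_comm[of z] cs_diff)
      also have "\<dots> = u" using z(2) by (simp add: h cs_mult)
      finally show "cscale z (cscale (inverse (z - l0)) u) - A (cscale (inverse (z - l0)) u) = u" .
    qed
    then show ?case using z(2) by (simp add: cs_mult)
  qed
  have l2: "((\<lambda>z. cscale ((z - l0) ^ Suc 0) (R z u)) \<longlongrightarrow> u) (at l0)"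
    by (rule Lim_transform_eventually[OF tendsto_const]) (use ev in simp)
  show ?thesis using tendsto_unique[OF at_l0_nb l1 l2] .
qed

lemma P_range: "range (B 0) = eigenspace_op A D l0"
proof
  show "range (B 0) \<subseteq> eigenspace_op A D l0" using P_ker by auto
  show "eigenspace_op A D l0 \<subseteq> range (B 0)"
  proof
    fix w assume "w \<in> eigenspace_op A D l0"
    then obtain c where "w = cscale c u" using ker by auto
    then have "w = B 0 (cscale c u)" by (simp add: B_cs P_u)
    then show "w \<in> range (B 0)" by simp
  qed
qed

lemma P_spec: "spectral_projection A D l0 (B 0)"
  unfolding spectral_projection_def
proof (intro exI[of _ e0] conjI allI impI e0)
  fix \<epsilon> f assume "0 < \<epsilon> \<and> \<epsilon> < e0"
  then have "(fint 0 f \<epsilon> has_integral B 0 f) {0..1}" by (intro B_int) auto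
  moreover have "fint 0 f \<epsilon> = (\<lambda>t. cscale (complex_of_real \<epsilon> * exp (2 * complex_of_real pi * \<i> * complex_of_real t))
          (R (l0 + complex_of_real \<epsilon> * exp (2 * complex_of_real pi * \<i> * complex_of_real t)) f))"
    by (simp add: fun_eq_iff fint_eq gam_def ee_def)
  ultimately show "((\<lambda>t. cscale (complex_of_real \<epsilon> * exp (2 * complex_of_real pi * \<i> * complex_of_real t))
          (R (l0 + complex_of_real \<epsilon> * exp (2 * complex_of_real pi * \<i> * complex_of_real t)) f)) has_integral B 0 f) {0..1}"
    by simp
qed

end



lemma one_dim_gen:
  assumes "one_dim_cspace S" "u \<in> S" "u \<noteq> (0::'r::real_vector \<times> 'r)"
  shows "S = range (\<lambda>c. cscale c u)"
proof -
  obtain v where v: "v \<noteq> 0" "S = range (\<lambda>c. cscale c v)" using assms(1) by (auto simp: one_dim_cspace_def)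
  obtain c0 where c0: "u = cscale c0 v" using assms(2) v by auto
  have "c0 \<noteq> 0" using c0 assms(3) by auto
  show ?thesis
  proof (rule set_eqI, rule iffI)
    fix w assume "w \<in> S"
    then obtain c where "w = cscale c v" using v by auto
    then have "w = cscale (c / c0) u" using \<open>c0 \<noteq> 0\<close> by (simp add: c0 cs_mult)
    then show "w \<in> range (\<lambda>c. cscale c u)" by simp
  next
    fix w assume "w \<in> range (\<lambda>c. cscale c u)"
    then obtain c where "w = cscale c u" by auto
    then have "w = cscale (c * c0) v" by (simp add: c0 cs_mult)
    then show "w \<in> S" using v by simp
  qed
qed

lemma phi_real_lin:
  assumes "bounded_linear \<phi>"
  shows "\<phi> (a + b) = \<phi> a + \<phi> b" "\<phi> (a - b) = \<phi> a - \<phi> b" "\<phi> (r *\<^sub>R a) = of_real r * \<phi> a"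
  using linear_add[OF bounded_linear.linear[OF assms]] linear_diff[OF bounded_linear.linear[OF assms]]
    linear_scale[OF bounded_linear.linear[OF assms]] by (auto simp: scaleR_conv_of_real)

lemma vanish_aux:
  fixes p x :: "'r::{real_normed_vector, ordered_real_vector}"
  assumes bl: "bounded_linear \<phi>" and pos: "pos_functional \<phi>"
    and p0: "\<phi> (p, 0) = 0" and h1: "x \<le> c *\<^sub>R p" and h2: "- x \<le> c *\<^sub>R p"
  shows "\<phi> (x, 0) = 0"
proof -
  note l = phi_real_lin[OF bl]
  have pv1: "pos_vec (c *\<^sub>R p - x, 0)" using h1 by (simp add: pos_vec_def)
  have "0 \<le> c *\<^sub>R p - (- x)" using h2 by (simp only: diff_ge_0_iff_ge)
  then have pv2: "pos_vec (c *\<^sub>R p + x, 0)" by (simp add: pos_vec_def)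
  have e1: "(c *\<^sub>R p - x, 0) = c *\<^sub>R (p, 0) - (x, (0::'r))" by simp
  have e2: "(c *\<^sub>R p + x, 0) = c *\<^sub>R (p, 0) + (x, (0::'r))" by simp
  have "\<phi> (c *\<^sub>R p - x, 0) = - \<phi> (x, 0)" unfolding e1 l p0 by simp
  moreover have "\<phi> (c *\<^sub>R p + x, 0) = \<phi> (x, 0)" unfolding e2 l p0 by simp
  ultimately have "Im (\<phi> (x, 0)) = 0" "Re (- \<phi> (x, 0)) \<ge> 0" "Re (\<phi> (x, 0)) \<ge> 0"
    using pos pv1 pv2 unfolding pos_functional_def by (metis)+
  then show ?thesis by (simp add: complex_eq_iff)
qed

lemma qi_phi:
  fixes u :: "'r::{banach, ordered_real_vector, lattice} \<times> 'r"
  assumes qi: "quasi_interior u" and bl: "bounded_linear \<phi>" and hom: "\<And>c f. \<phi> (cscale c f) = c * \<phi> f"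
    and pos: "pos_functional \<phi>" and z: "\<phi> u = 0"
  shows "\<phi> f = 0"
proof -
  have pu: "pos_vec u" and cl: "closure (principal_ideal u) = UNIV" using qi by (auto simp: quasi_interior_def)
  have u: "u = (fst u, 0)" using pu by (simp add: pos_vec_def prod_eq_iff)
  have p0: "\<phi> (fst u, 0) = 0" using z u by simp
  have "principal_ideal u \<subseteq> {f. \<phi> f = 0}"
  proof
    fix f assume "f \<in> principal_ideal u"
    then obtain c where c: "\<And>\<theta>::real. cos \<theta> *\<^sub>R fst f + sin \<theta> *\<^sub>R snd f \<le> c *\<^sub>R fst u"
      by (auto simp: principal_ideal_def)
    have 1: "fst f \<le> c *\<^sub>R fst u" using c[of 0] by simp
    have 2: "- fst f \<le> c *\<^sub>R fst u" using c[of pi] by simp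
    have 3: "snd f \<le> c *\<^sub>R fst u" using c[of "pi/2"] by simp
    have 4: "- snd f \<le> c *\<^sub>R fst u" using c[of "- pi/2"] by simp
    have a: "\<phi> (fst f, 0) = 0" by (rule vanish_aux[OF bl pos p0 1 2])
    have b: "\<phi> (snd f, 0) = 0" by (rule vanish_aux[OF bl pos p0 3 4])
    have "(0, snd f) = cscale \<i> (snd f, 0)" by (simp add: cscale_def)
    then have b': "\<phi> (0, snd f) = 0" using hom b by simp
    have "f = (fst f, 0) + (0, snd f)" by simp
    then have "\<phi> f = \<phi> (fst f, 0) + \<phi> (0, snd f)" using phi_real_lin(1)[OF bl] by metis
    then show "f \<in> {f. \<phi> f = 0}" using a b' by simp
  qed
  moreover have "closed {f. \<phi> f = 0}"
    by (rule closed_Collect_eq) (auto intro: linear_continuous_on bl continuous_on_const)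
  ultimately have "closure (principal_ideal u) \<subseteq> {f. \<phi> f = 0}" by (rule closure_minimal)
  then show ?thesis using cl by auto
qed

theorem proposition7p9:
  fixes A :: "'r::{banach,ordered_real_vector,lattice} \<times> 'r \<Rightarrow> 'r \<times> 'r"
    and D :: "('r \<times> 'r) set"
    and l0 :: complex
  assumes "real_banach_lattice TYPE('r)"
    and "complex_linear_op A D" and "closed_op A D" and "densely_defined D"
    and "resolvent_pole A D l0"
    and "one_dim_cspace (eigenspace_op A D l0)"
    and "\<exists>u\<in>eigenspace_op A D l0. pos_vec u \<and> u \<noteq> 0"
    and "\<exists>\<phi>\<in>adj_eigenspace A D l0. pos_functional \<phi> \<and> \<phi> \<noteq> (\<lambda>_. 0)"
    and "(\<exists>u\<in>eigenspace_op A D l0. quasi_interior u)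
         \<or> (\<exists>\<phi>\<in>adj_eigenspace A D l0. strictly_pos_functional \<phi>)"
  shows "first_order_pole A D l0 \<and>
         (\<exists>P. spectral_projection A D l0 P \<and> one_dim_cspace (range P) \<and> pos_op P)"
proof -
  interpret opsetting A D using assms(2,3) by unfold_locales
  obtain e0 where e0: "0 < e0" "ball l0 e0 - {l0} \<subseteq> U"
    using assms(5) by (auto simp: resolvent_pole_def)
  obtain n L where lim: "((\<lambda>z. Blinfun (\<lambda>y. cscale ((z - l0) ^ n) (R z y))) \<longlongrightarrow> L) (at l0)"
    using assms(5) by (auto simp: resolvent_pole_def)
  define M where "M = norm L + 1"
  have "\<forall>\<^sub>F z in at l0. norm (Blinfun (\<lambda>y. cscale ((z - l0) ^ n) (R z y))) < M"
    using order_tendstoD(2)[OF tendsto_norm[OF lim], of M] by (simp add: M_def)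
  then obtain d where d: "0 < d" "\<And>z. z \<noteq> l0 \<Longrightarrow> dist z l0 < d \<Longrightarrow> norm (Blinfun (\<lambda>y. cscale ((z - l0) ^ n) (R z y))) < M"
    unfolding eventually_at by auto
  define \<delta> where "\<delta> = min d e0"
  interpret pole A D l0 e0 n M \<delta>
  proof unfold_locales
    show "0 < e0" "ball l0 e0 - {l0} \<subseteq> U" by (fact e0)+
    show "0 < \<delta>" "\<delta> \<le> e0" using d e0 by (auto simp: \<delta>_def)
    show "0 \<le> M" by (simp add: M_def add_nonneg_nonneg)
    fix z y assume z: "0 < cmod (z - l0)" "cmod (z - l0) < \<delta>"
    then have zU: "z \<in> U" using e0 by (auto simp: \<delta>_def dist_norm norm_minus_commute)
    have bl: "bounded_linear (\<lambda>y. cscale ((z - l0) ^ n) (R z y))"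
      using bounded_linear_compose[OF bounded_linear_cs_right res_bl[OF zU]] by (simp add: o_def)
    have "norm (cscale ((z - l0) ^ n) (R z y)) = norm (blinfun_apply (Blinfun (\<lambda>y. cscale ((z - l0) ^ n) (R z y))) y)"
      by (simp add: bounded_linear_Blinfun_apply[OF bl])
    also have "\<dots> \<le> norm (Blinfun (\<lambda>y. cscale ((z - l0) ^ n) (R z y))) * norm y" by (rule norm_blinfun)
    also have "\<dots> \<le> M * norm y"
      using d(2)[of z] z by (intro mult_right_mono) (auto simp: \<delta>_def dist_norm less_imp_le)
    finally show "norm (cscale ((z - l0) ^ n) (R z y)) \<le> M * norm y" .
  qed
  obtain u \<phi> where u: "u \<in> eigenspace_op A D l0" "u \<noteq> 0" "pos_vec u"
    and ph: "\<phi> \<in> adj_eigenspace A D l0" "pos_functional \<phi>" and phu: "Im (\<phi> u) = 0" "Re (\<phi> u) > 0"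
  proof -
    from assms(9) show ?thesis
    proof
      assume "\<exists>u\<in>eigenspace_op A D l0. quasi_interior u"
      then obtain u1 where u1: "u1 \<in> eigenspace_op A D l0" "quasi_interior u1" by auto
      obtain \<phi>0 where p0: "\<phi>0 \<in> adj_eigenspace A D l0" "pos_functional \<phi>0" "\<phi>0 \<noteq> (\<lambda>_. 0)"
        using assms(8) by auto
      note pp = phi_props[OF p0(1)]
      have nz: "\<phi>0 u1 \<noteq> 0"
      proof
        assume "\<phi>0 u1 = 0"
        then have "\<phi>0 f = 0" for f by (rule qi_phi[OF u1(2) pp(1) pp(2) p0(2)])
        then show False using p0(3) by auto
      qed
      have pu1: "pos_vec u1" using u1(2) by (simp add: quasi_interior_def)
      have "u1 \<noteq> 0" using nz linear_0[OF bounded_linear.linear[OF pp(1)]] by auto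
      moreover have "Im (\<phi>0 u1) = 0" "Re (\<phi>0 u1) \<ge> 0" using p0(2) pu1 unfolding pos_functional_def by blast+
      moreover then have "Re (\<phi>0 u1) > 0" using nz by (auto simp: complex_eq_iff)
      ultimately show ?thesis using that[OF u1(1) _ pu1 p0(1,2)] by auto
    next
      assume "\<exists>\<phi>\<in>adj_eigenspace A D l0. strictly_pos_functional \<phi>"
      then obtain \<phi>1 where p1: "\<phi>1 \<in> adj_eigenspace A D l0" "strictly_pos_functional \<phi>1" by auto
      obtain u0 where u0: "u0 \<in> eigenspace_op A D l0" "pos_vec u0" "u0 \<noteq> 0" using assms(7) by auto
      note pp = phi_props[OF p1(1)]
      have "pos_functional \<phi>1"
        unfolding pos_functional_def
      proof (intro allI impI)
        fix f :: "'r \<times> 'r" assume "pos_vec f"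
        show "Im (\<phi>1 f) = 0 \<and> 0 \<le> Re (\<phi>1 f)"
        proof (cases "f = 0")
          case True then show ?thesis using linear_0[OF bounded_linear.linear[OF pp(1)]] by simp
        next
          case False
          have "Im (\<phi>1 f) = 0 \<and> 0 < Re (\<phi>1 f)"
            using p1(2) \<open>pos_vec f\<close> False unfolding strictly_pos_functional_def by blast
          then show ?thesis by simp
        qed
      qed
      moreover have "Im (\<phi>1 u0) = 0" "Re (\<phi>1 u0) > 0" using p1(2) u0 unfolding strictly_pos_functional_def by blast+
      ultimately show ?thesis using that[OF u0(1) u0(3) u0(2) p1(1)] by auto
    qed
  qed
  have ker: "eigenspace_op A D l0 = range (\<lambda>c. cscale c u)"
    by (rule one_dim_gen[OF assms(6) u(1,2)])
  have phu0: "\<phi> u \<noteq> 0" using phu by auto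
  interpret pole2 A D l0 e0 n M \<delta> u \<phi>
    by unfold_locales (fact ker, fact ph(1), fact phu0)
  have fop: "first_order_pole A D l0"
    unfolding first_order_pole_def using assms(5) first_lim by blast
  have pos: "pos_op (B 0)"
    unfolding pos_op_def
  proof (intro allI impI)
    fix f :: "'r \<times> 'r" assume pf: "pos_vec f"
    obtain c where c: "B 0 f = cscale c u" using P_ker[of f] ker by auto
    have "c * \<phi> u = \<phi> f" using P_phi[of f] c phi_props(2)[OF ph(1)] by simp
    then have cdef: "c = \<phi> f / \<phi> u" using phu0 by (simp add: field_simps)
    have fr: "Im (\<phi> f) = 0" "Re (\<phi> f) \<ge> 0" using ph(2) pf unfolding pos_functional_def by blast+
    have "Im c = 0" "Re c \<ge> 0" unfolding cdef using fr phu by (auto simp: Im_divide Re_divide)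
    moreover have "snd u = 0" "fst u \<ge> 0" using u(3) by (auto simp: pos_vec_def)
    ultimately show "pos_vec (B 0 f)" unfolding c by (simp add: pos_vec_def cscale_def scaleR_nonneg_nonneg)
  qed
  show ?thesis
    using fop P_spec pos assms(6) P_range by auto
qed



end
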